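(* Let $\mathcal N\in\mathrm{Ch}(A'B',AB)$ be no-signaling from $A'$ to $B$. Then \[ S^\downarrow_\infty(R_AA|R_BB)_{\Phi^{\mathcal N}}-\log|A'|=S^{\not\to}_\infty[A|B]_{\mathcal N}\le S_\infty[A|B]_{\mathcal N}. \]
   Context: All systems are finite-dimensional; $|X|$ denotes dimension; $\log$ base 2; $\mathrm{St}(X)$ density operators; $\mathrm{Ch}(X',X)$ quantum channels. Maximally entangled state $\Phi_{RX}:=\frac1{|X|}\sum_{i,j}|ii\rangle\langle jj|$; Choi state $\Phi^{\mathcal N}_{R_AAR_BB}:=(\mathrm{id}\otimes\mathcal N)(\Phi_{R_AA'}\otimes\Phi_{R_BB'})$. $\mathcal R^{\mathbb 1}_{A'\to A}(X):=\operatorname{tr}(X)\mathbb 1_A$. $D_\infty(\rho\|\sigma):=\log\inf\{\lambda:\rho\le\lambda\sigma\}$; for a channel $\mathcal M$ and CP map $\mathcal M'$, $D_\infty[\mathcal M\|\mathcal M']:=\sup_{\rho\in\mathrm{St}(RX')}D_\infty((\mathrm{id}\otimes\mathcal M)(\rho)\|(\mathrm{id}\otimes\mathcal M')(\rho))$. $S_\infty[A|B]_{\mathcal N}:=-\inf_{\mathcal Q\in\mathrm{Ch}(B',B)}D_\infty[\mathcal N\|\mathcal R^{\mathbb 1}_{A'\to A}\otimes\mathcal Q]$; $S^{\not\to}_\infty[A|B]_{\mathcal N}:=-D_\infty[\mathcal N\|\mathcal R^{\mathbb1}_{A\to A}\circ\mathcal N]$ with $(\mathcal R^{\mathbb1}_{A\to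 A}\circ\mathcal N)(X)=\mathbb 1_A\otimes\operatorname{tr}_A\mathcal N(X)$. $S^\downarrow_\infty(X|Y)_\rho:=-D_\infty(\rho_{XY}\|\mathbb 1_X\otimes\rho_Y)$. $\mathcal N$ is no-signaling from $A'$ to $B$ if there is $\mathcal Q^{\mathcal N}\in\mathrm{Ch}(B',B)$ with $\operatorname{tr}_A\circ\mathcal N=\operatorname{tr}_{A'}\otimes\mathcal Q^{\mathcal N}$. *)

theory Defs
  imports "Jordan_Normal_Form.Matrix" "HOL-Library.Extended_Real"
begin

text \<open>Finite-dimensional quantum systems are represented by their dimensions (nat);
operators on a system of dimension n are complex n x n matrices. A composite system XY
of dimensions dX, dY has dimension dX*dY with the index of (x,y) being x*dY + y
(Kronecker ordering). Linear maps between operator spaces are functions on complex mat;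
only their values on matrices of the correct input dimension are relevant.\<close>

definition mtrace :: "complex mat \<Rightarrow> complex" where
  "mtrace A = (\<Sum>i<dim_row A. A $$ (i,i))"

definition psd :: "complex mat \<Rightarrow> bool" where
  "psd A \<longleftrightarrow> square_mat A \<and>
     (\<forall>v \<in> carrier_vec (dim_row A). Im ((A *\<^sub>v v) \<bullet>c v) = 0 \<and> Re ((A *\<^sub>v v) \<bullet>c v) \<ge> 0)"

definition loewner_le :: "complex mat \<Rightarrow> complex mat \<Rightarrow> bool" where
  "loewner_le A B \<longleftrightarrow> dim_row A = dim_row B \<and> dim_col A = dim_col B \<and> psd (B - A)"

definition density :: "nat \<Rightarrow> complex mat \<Rightarrow> bool" where
  "density n \<rho> \<longleftrightarrow> \<rho> \<in> carrier_mat n n \<and> psd \<rho> \<and> mtrace \<rho> = 1"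

definition kron :: "complex mat \<Rightarrow> complex mat \<Rightarrow> complex mat" where
  "kron A B = mat (dim_row A * dim_row B) (dim_col A * dim_col B)
     (\<lambda>(i,j). A $$ (i div dim_row B, j div dim_col B) * B $$ (i mod dim_row B, j mod dim_col B))"

definition mat_unit :: "nat \<Rightarrow> nat \<Rightarrow> nat \<Rightarrow> complex mat" where
  "mat_unit n i j = mat n n (\<lambda>(p,q). if p = i \<and> q = j then 1 else 0)"

definition ptrace_first :: "nat \<Rightarrow> nat \<Rightarrow> complex mat \<Rightarrow> complex mat" where
  "ptrace_first dX dY \<rho> = mat dY dY (\<lambda>(i,j). \<Sum>x<dX. \<rho> $$ (x*dY + i, x*dY + j))"

definition map_tensor :: "nat \<Rightarrow> nat \<Rightarrow> nat \<Rightarrow> nat \<Rightarrow> (complex mat \<Rightarrow> complex mat)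
     \<Rightarrow> (complex mat \<Rightarrow> complex mat) \<Rightarrow> complex mat \<Rightarrow> complex mat" where
  "map_tensor n1 m1 n2 m2 M1 M2 X = mat (m1*m2) (m1*m2) (\<lambda>(p,q).
     \<Sum>i<n1. \<Sum>j<n1. \<Sum>k<n2. \<Sum>l<n2.
       X $$ (i*n2 + k, j*n2 + l) * (kron (M1 (mat_unit n1 i j)) (M2 (mat_unit n2 k l))) $$ (p,q))"

definition id_tensor :: "nat \<Rightarrow> nat \<Rightarrow> nat \<Rightarrow> (complex mat \<Rightarrow> complex mat) \<Rightarrow> complex mat \<Rightarrow> complex mat" where
  "id_tensor k n m M = map_tensor k k n m id M"

definition is_linear_map :: "nat \<Rightarrow> nat \<Rightarrow> (complex mat \<Rightarrow> complex mat) \<Rightarrow> bool" where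
  "is_linear_map n m M \<longleftrightarrow>
     (\<forall>X \<in> carrier_mat n n. M X \<in> carrier_mat m m) \<and>
     (\<forall>X \<in> carrier_mat n n. \<forall>Y \<in> carrier_mat n n. M (X + Y) = M X + M Y) \<and>
     (\<forall>X \<in> carrier_mat n n. \<forall>c. M (c \<cdot>\<^sub>m X) = c \<cdot>\<^sub>m M X)"

definition is_CP :: "nat \<Rightarrow> nat \<Rightarrow> (complex mat \<Rightarrow> complex mat) \<Rightarrow> bool" where
  "is_CP n m M \<longleftrightarrow> is_linear_map n m M \<and>
     (\<forall>k. \<forall>X \<in> carrier_mat (k*n) (k*n). psd X \<longrightarrow> psd (id_tensor k n m M X))"

definition is_channel :: "nat \<Rightarrow> nat \<Rightarrow> (complex mat \<Rightarrow> complex mat) \<Rightarrow> bool" where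
  "is_channel n m M \<longleftrightarrow> is_CP n m M \<and> (\<forall>X \<in> carrier_mat n n. mtrace (M X) = mtrace X)"

text \<open>Max-relative entropy D_infinity(rho||sigma) = log inf {lambda. rho <= lambda sigma}
 (value +infinity if the set is empty).\<close>
definition Dinf :: "complex mat \<Rightarrow> complex mat \<Rightarrow> ereal" where
  "Dinf \<rho> \<sigma> = (INF t \<in> {t::real. t > 0 \<and> loewner_le \<rho> (complex_of_real t \<cdot>\<^sub>m \<sigma>)}. ereal (log 2 t))"

definition Dchan :: "nat \<Rightarrow> nat \<Rightarrow> (complex mat \<Rightarrow> complex mat) \<Rightarrow> (complex mat \<Rightarrow> complex mat) \<Rightarrow> ereal" where
  "Dchan n m M M' = (SUP (k, \<rho>) \<in> {(k, \<rho>). density (k*n) \<rho>}.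
       Dinf (id_tensor k n m M \<rho>) (id_tensor k n m M' \<rho>))"

definition replace_one :: "nat \<Rightarrow> (complex mat \<Rightarrow> complex mat)" where
  "replace_one m X = mtrace X \<cdot>\<^sub>m 1\<^sub>m m"

text \<open>Systems: A' (dim a'), B' (dim b'), A (dim a), B (dim b); N : A'B' -> AB.\<close>

definition S_inf :: "nat \<Rightarrow> nat \<Rightarrow> nat \<Rightarrow> nat \<Rightarrow> (complex mat \<Rightarrow> complex mat) \<Rightarrow> ereal" where
  "S_inf a' b' a b N = - (INF Q \<in> {Q. is_channel b' b Q}.
      Dchan (a'*b') (a*b) N (map_tensor a' a b' b (replace_one a) Q))"

definition S_nosig :: "nat \<Rightarrow> nat \<Rightarrow> nat \<Rightarrow> nat \<Rightarrow> (complex mat \<Rightarrow> complex mat) \<Rightarrow> ereal" where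
  "S_nosig a' b' a b N = - Dchan (a'*b') (a*b) N (\<lambda>X. kron (1\<^sub>m a) (ptrace_first a b (N X)))"

definition S_down :: "nat \<Rightarrow> nat \<Rightarrow> complex mat \<Rightarrow> ereal" where
  "S_down dX dY \<rho> = - Dinf \<rho> (kron (1\<^sub>m dX) (ptrace_first dX dY \<rho>))"

text \<open>Choi state (id tensor N)(Phi_{R_A A'} tensor Phi_{R_B B'}) with its systems ordered
 R_A A R_B B. Index of (r_A, x, r_B, y) is ((r_A*a + x)*b' + r_B)*b + y.\<close>
definition choi :: "nat \<Rightarrow> nat \<Rightarrow> nat \<Rightarrow> nat \<Rightarrow> (complex mat \<Rightarrow> complex mat) \<Rightarrow> complex mat" where
  "choi a' b' a b N = mat (a'*a*b'*b) (a'*a*b'*b) (\<lambda>(p,q).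
     let y = p mod b; rB = (p div b) mod b'; x = (p div (b*b')) mod a; rA = p div (b*b'*a);
         y2 = q mod b; rB2 = (q div b) mod b'; x2 = (q div (b*b')) mod a; rA2 = q div (b*b'*a)
     in (1 / (of_nat a' * of_nat b')) *
        N (mat_unit (a'*b') (rA*b' + rB) (rA2*b' + rB2)) $$ (x*b + y, x2*b + y2))"

definition no_signaling :: "nat \<Rightarrow> nat \<Rightarrow> nat \<Rightarrow> nat \<Rightarrow> (complex mat \<Rightarrow> complex mat) \<Rightarrow> bool" where
  "no_signaling a' b' a b N \<longleftrightarrow> (\<exists>Q. is_channel b' b Q \<and>
     (\<forall>X \<in> carrier_mat (a'*b') (a'*b'). ptrace_first a b (N X) = Q (ptrace_first a' b' X)))"

end

theory Submission
  imports Defs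
begin



lemma sum_split_mult:
  "(\<Sum>I<(u::nat)*v. f I) = (\<Sum>i<u. \<Sum>j<v. f (i*v+j))"
proof -
  have "(\<Sum>I<u*v. f I) = (\<Sum>i<u. sum f {i*v..<i*v+v})" by (rule sum.nat_group[symmetric])
  also have "\<dots> = (\<Sum>i<u. \<Sum>j<v. f (i*v+j))"
  proof (rule sum.cong[OF refl])
    fix i show "sum f {i*v..<i*v+v} = (\<Sum>j<v. f (i*v+j))"
      using sum.atLeastLessThan_shift_0[of f "i*v" "i*v+v"] by (simp add: lessThan_atLeast0 comp_def)
  qed
  finally show ?thesis .
qed

lemma form_eq:
  assumes "A \<in> carrier_mat d d" "v \<in> carrier_vec d"
  shows "(A *\<^sub>v v) \<bullet>c v = (\<Sum>i<d. \<Sum>j<d. cnj (v$i) * A$$(i,j) * v$j)"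
  using assms
  by (auto simp: scalar_prod_def mult_mat_vec_def sum_distrib_right sum_distrib_left
      lessThan_atLeast0 mult.commute mult.left_commute intro!: sum.cong)

lemma psd_form:
  assumes "A \<in> carrier_mat d d"
  shows "psd A \<longleftrightarrow> (\<forall>f. 0 \<le> (\<Sum>i<d. \<Sum>j<d. cnj (f i) * A$$(i,j) * f j))"
proof
  assume p: "psd A"
  show "\<forall>f. 0 \<le> (\<Sum>i<d. \<Sum>j<d. cnj (f i) * A$$(i,j) * f j)"
  proof
    fix f :: "nat \<Rightarrow> complex"
    have v: "vec d f \<in> carrier_vec d" by simp
    have "0 \<le> (A *\<^sub>v vec d f) \<bullet>c vec d f"
      using p assms v unfolding psd_def less_eq_complex_def by auto
    also have "\<dots> = (\<Sum>i<d. \<Sum>j<d. cnj (f i) * A$$(i,j) * f j)"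
      by (subst form_eq[OF assms v]) simp
    finally show "0 \<le> (\<Sum>i<d. \<Sum>j<d. cnj (f i) * A$$(i,j) * f j)" .
  qed
next
  assume h: "\<forall>f. 0 \<le> (\<Sum>i<d. \<Sum>j<d. cnj (f i) * A$$(i,j) * f j)"
  show "psd A" unfolding psd_def
  proof (intro conjI ballI)
    show "square_mat A" using assms by auto
    fix v :: "complex vec" assume "v \<in> carrier_vec (dim_row A)"
    then have v: "v \<in> carrier_vec d" using assms by auto
    have "0 \<le> (A *\<^sub>v v) \<bullet>c v"
      using h[rule_format, of "\<lambda>i. v$i"] form_eq[OF assms v] by simp
    then show "Im ((A *\<^sub>v v) \<bullet>c v) = 0" "0 \<le> Re ((A *\<^sub>v v) \<bullet>c v)"
      unfolding less_eq_complex_def by auto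
  qed
qed




definition form :: "nat \<Rightarrow> (nat \<Rightarrow> nat \<Rightarrow> complex) \<Rightarrow> (nat \<Rightarrow> complex) \<Rightarrow> complex" where
  "form d A f = (\<Sum>i<d. \<Sum>j<d. cnj (f i) * A i j * f j)"

definition psdf :: "nat \<Rightarrow> (nat \<Rightarrow> nat \<Rightarrow> complex) \<Rightarrow> bool" where
  "psdf d A \<longleftrightarrow> (\<forall>f. 0 \<le> form d A f)"

lemma sum_two:
  assumes "i < (d::nat)" "j < d" "i \<noteq> j" "\<And>k. k < d \<Longrightarrow> k \<noteq> i \<Longrightarrow> k \<noteq> j \<Longrightarrow> g k = 0"
  shows "(\<Sum>k<d. g k) = g i + (g j :: complex)"
proof -
  have "(\<Sum>k<d. g k) = (\<Sum>k\<in>{i,j}. g k)"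
    apply (rule sum.mono_neutral_right)
    using assms by auto
  then show ?thesis using assms by simp
qed

lemma sum_one:
  assumes "i < (d::nat)" "\<And>k. k < d \<Longrightarrow> k \<noteq> i \<Longrightarrow> g k = 0"
  shows "(\<Sum>k<d. g k) = (g i :: complex)"
proof -
  have "(\<Sum>k<d. g k) = (\<Sum>k\<in>{i}. g k)"
    apply (rule sum.mono_neutral_right)
    using assms by auto
  then show ?thesis by simp
qed

lemma form_two:
  assumes "i < d" "j < d" "i \<noteq> j"
  shows "form d A (\<lambda>k. if k = i then x else if k = j then y else 0)
    = cnj x * A i i * x + cnj x * A i j * y + (cnj y * A j i * x + cnj y * A j j * y)"
  unfolding form_def
  apply (subst sum_two[OF assms])
   apply (force intro!: sum.neutral)
  apply (subst sum_two[OF assms], simp)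
  using assms by auto

lemma form_one:
  assumes "i < d"
  shows "form d A (\<lambda>k. if k = i then x else 0) = cnj x * A i i * x"
  unfolding form_def
  apply (subst sum_one[OF assms])
   apply (force intro!: sum.neutral)
  apply (subst sum_one[OF assms], simp)
  using assms by simp

lemma psdf_diag:
  assumes "psdf d A" "i < d"
  shows "Im (A i i) = 0" "0 \<le> Re (A i i)"
proof -
  have "0 \<le> form d A (\<lambda>k. if k = i then 1 else 0)" using assms(1) unfolding psdf_def by blast
  then show "Im (A i i) = 0" "0 \<le> Re (A i i)"
    using form_one[OF assms(2), of A 1] by (auto simp: less_eq_complex_def)
qed

lemma psdf_herm:
  assumes "psdf d A" "i < d" "j < d"
  shows "A j i = cnj (A i j)"
proof (cases "i = j")
  case True
  then show ?thesis using psdf_diag[OF assms(1,2)] by (simp add: complex_eq_iff)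
next
  case False
  have h1: "0 \<le> form d A (\<lambda>k. if k = i then 1 else if k = j then 1 else 0)"
    and h2: "0 \<le> form d A (\<lambda>k. if k = i then 1 else if k = j then \<i> else 0)"
    using assms(1) unfolding psdf_def by blast+
  note f1 = form_two[OF assms(2,3) False, of A 1 1]
  note f2 = form_two[OF assms(2,3) False, of A 1 \<i>]
  from h1 f1 psdf_diag[OF assms(1,2)] psdf_diag[OF assms(1,3)]
  have "Im (A i j) + Im (A j i) = 0" by (auto simp: less_eq_complex_def)
  moreover from h2 f2 psdf_diag[OF assms(1,2)] psdf_diag[OF assms(1,3)]
  have "Re (A i j) - Re (A j i) = 0" by (auto simp: less_eq_complex_def)
  ultimately show ?thesis by (simp add: complex_eq_iff)
qed

lemma psdf_pivot0:
  assumes "psdf d A" "e < d" "j < d" "A e e = 0"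
  shows "A e j = 0"
proof (rule ccontr)
  assume w0: "A e j \<noteq> 0"
  then have ej: "j \<noteq> e" using assms by auto
  define w where "w = A e j"
  have hj: "A j e = cnj w" using psdf_herm[OF assms(1,2,3)] w_def by simp
  define n2 where "n2 = (cmod w)^2"
  have n2pos: "n2 > 0" using w0 w_def n2_def by simp
  define s where "s = (Re (A j j) + 1) / (2 * n2)"
  have nw: "cnj w * w = of_real n2" unfolding n2_def
    by (metis complex_norm_square mult.commute of_real_power)
  define t where "t = - (of_real s) * w"
  have "0 \<le> form d A (\<lambda>k. if k = e then t else if k = j then 1 else 0)"
    using assms(1) unfolding psdf_def by blast
  also have "\<dots> = cnj t * w + cnj w * t + A j j"
    using form_two[OF assms(2,3) ej[symmetric], of A t 1] assms(4) hj w_def by simp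
  also have "cnj t * w = - of_real s * of_real n2"
    unfolding t_def using nw by (simp add: mult.commute mult.left_commute)
  also have "cnj w * t = - of_real s * of_real n2"
    unfolding t_def using nw by (simp add: mult.commute mult.left_commute)
  finally have "0 \<le> Re (- of_real s * of_real n2 + (- of_real s * of_real n2) + A j j)"
    by (simp add: less_eq_complex_def)
  then have "0 \<le> - 2 * s * n2 + Re (A j j)" by (simp add: algebra_simps)
  moreover have "2 * s * n2 = Re (A j j) + 1" unfolding s_def using n2pos by simp
  ultimately show False by linarith
qed




lemma form_cong_pivot:
  assumes "\<And>i. i < d \<Longrightarrow> B i e = 0" "\<And>i. i < d \<Longrightarrow> B e i = 0"
    "\<And>k. k \<noteq> e \<Longrightarrow> f' k = f k"
  shows "form d B f = form d B f'"
  unfolding form_def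
proof (intro sum.cong refl)
  fix i j assume "i \<in> {..<d}" "j \<in> {..<d}"
  then show "cnj (f i) * B i j * f j = cnj (f' i) * B i j * f' j"
    using assms by (cases "i = e"; cases "j = e") auto
qed

lemma form_diff_rank1:
  "form d (\<lambda>i j. A i j - u i * cnj (u j)) f
   = form d A f - cnj (\<Sum>j<d. cnj (u j) * f j) * (\<Sum>j<d. cnj (u j) * f j)"
proof -
  have "form d (\<lambda>i j. A i j - u i * cnj (u j)) f
     = form d A f - (\<Sum>i<d. \<Sum>j<d. (cnj (f i) * u i) * (cnj (u j) * f j))"
    unfolding form_def by (simp add: algebra_simps sum_subtractf)
  also have "(\<Sum>i<d. \<Sum>j<d. (cnj (f i) * u i) * (cnj (u j) * f j))
      = (\<Sum>i<d. cnj (f i) * u i) * (\<Sum>j<d. cnj (u j) * f j)"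
    by (simp add: sum_product)
  also have "(\<Sum>i<d. cnj (f i) * u i) = cnj (\<Sum>j<d. cnj (u j) * f j)"
    by (simp add: mult.commute)
  finally show ?thesis .
qed

lemma decomp_aux:
  "\<forall>A::nat\<Rightarrow>nat\<Rightarrow>complex. psdf d A \<longrightarrow> l \<le> d \<longrightarrow> (\<forall>i<d. \<forall>j<d. (i < d - l \<or> j < d - l) \<longrightarrow> A i j = 0) \<longrightarrow>
     (\<exists>(r::nat) U. \<forall>i<d. \<forall>j<d. A i j = (\<Sum>s<r. U s i * cnj (U s j)))"
proof (induction l)
  case 0
  show ?case
  proof (intro allI impI)
    fix A :: "nat \<Rightarrow> nat \<Rightarrow> complex"
    assume z0: "\<forall>i<d. \<forall>j<d. (i < d - 0 \<or> j < d - 0) \<longrightarrow> A i j = 0"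
    show "\<exists>(r::nat) U. \<forall>i<d. \<forall>j<d. A i j = (\<Sum>s<r. U s i * cnj (U s j))"
      by (rule exI[where x="0::nat"], rule exI[where x="\<lambda>s i. 0::complex"]) (use z0 in simp)
  qed
next
  case (Suc l)
  show ?case
  proof (intro allI impI)
    fix A :: "nat \<Rightarrow> nat \<Rightarrow> complex"
    assume psd: "psdf d A" and ld: "Suc l \<le> d"
      and z: "\<forall>i<d. \<forall>j<d. (i < d - Suc l \<or> j < d - Suc l) \<longrightarrow> A i j = 0"
    define e where "e = d - Suc l"
    have ed: "e < d" and de: "d - l = Suc e" using ld unfolding e_def by auto
    show "\<exists>(r::nat) U. \<forall>i<d. \<forall>j<d. A i j = (\<Sum>s<r. U s i * cnj (U s j))"
    proof (cases "A e e = 0")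
      case True
      have r: "A e j = 0" if "j < d" for j using psdf_pivot0[OF psd ed that True] .
      have c: "A j e = 0" if "j < d" for j using psdf_herm[OF psd ed that] r[OF that] by simp
      have "\<forall>i<d. \<forall>j<d. (i < d - l \<or> j < d - l) \<longrightarrow> A i j = 0"
      proof (intro allI impI)
        fix i j assume "i < d" "j < d" "i < d - l \<or> j < d - l"
        then show "A i j = 0" using z r c unfolding de e_def[symmetric]
          by (metis less_SucE)
      qed
      moreover have "l \<le> d" using ld by simp
      ultimately show ?thesis using mp[OF mp[OF mp[OF spec[OF Suc.IH, of A] psd]]] by blast
    next
      case False
      have imz: "Im (A e e) = 0" and rep: "0 \<le> Re (A e e)" using psdf_diag[OF psd ed] by auto
      have repos: "0 < Re (A e e)" using False imz rep by (metis complex_eqI zero_complex.simps order_le_less)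
      define r0 where "r0 = sqrt (Re (A e e))"
      have r0pos: "r0 > 0" using repos r0_def by simp
      have Aee: "A e e = of_real (r0 * r0)" using imz rep r0_def by (simp add: complex_eq_iff)
      define u where "u i = A i e / of_real r0" for i
      have ue: "u e = of_real r0" unfolding u_def Aee using r0pos by simp
      define A' where "A' i j = A i j - u i * cnj (u j)" for i j
      have A'col: "A' i e = 0" if "i < d" for i
        unfolding A'_def u_def using r0pos by (simp add: Aee)
      have A'row: "A' e j = 0" if "j < d" for j
        unfolding A'_def u_def using r0pos psdf_herm[OF psd that ed] by (simp add: Aee)
      have psd': "psdf d A'"
        unfolding psdf_def
      proof
        fix f
        define w where "w = (\<Sum>j<d. cnj (u j) * f j)"
        define f' where "f' = f(e := f e - w / of_real r0)"
        have "form d A' f = form d A' f'"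
          by (rule form_cong_pivot[where B=A' and e=e and d=d]) (auto simp: f'_def A'col A'row)
        also have "\<dots> = form d A f' - cnj (\<Sum>j<d. cnj (u j) * f' j) * (\<Sum>j<d. cnj (u j) * f' j)"
          unfolding A'_def by (rule form_diff_rank1)
        also have "(\<Sum>j<d. cnj (u j) * f' j) = 0"
        proof -
          have "(\<Sum>j<d. cnj (u j) * f' j) = (\<Sum>j<d. cnj (u j) * f j + (if j = e then - w else 0))"
          proof (rule sum.cong[OF refl])
            fix j show "cnj (u j) * f' j = cnj (u j) * f j + (if j = e then - w else 0)"
            proof (cases "j = e")
              case True
              have "cnj (u e) * (f e - w / of_real r0) = cnj (u e) * f e - w"
                using r0pos by (simp add: ue right_diff_distrib)
              then show ?thesis using True by (simp add: f'_def)
            next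
              case False then show ?thesis by (simp add: f'_def)
            qed
          qed
          also have "\<dots> = w - w" using ed by (simp add: sum.distrib w_def)
          finally show ?thesis by simp
        qed
        finally have "form d A' f = form d A f'" by simp
        then show "0 \<le> form d A' f" using psd unfolding psdf_def by simp
      qed
      have z': "\<forall>i<d. \<forall>j<d. (i < d - l \<or> j < d - l) \<longrightarrow> A' i j = 0"
      proof (intro allI impI)
        fix i j assume ij: "i < d" "j < d" "i < d - l \<or> j < d - l"
        have ui: "u k = 0" if "k < e" for k using z that ed unfolding u_def e_def by auto
        show "A' i j = 0"
        proof (cases "i = e \<or> j = e")
          case True then show ?thesis using A'col A'row ij by auto
        next
          case False
          then have "i < e \<or> j < e" using ij de by auto
          then show ?thesis unfolding A'_def using z ij ui unfolding e_def by auto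
        qed
      qed
      have "l \<le> d" using ld by simp
      obtain r :: nat and U where U: "\<forall>i<d. \<forall>j<d. A' i j = (\<Sum>s<r. U s i * cnj (U s j))"
        using mp[OF mp[OF mp[OF spec[OF Suc.IH, of A'] psd'] \<open>l \<le> d\<close>] z'] by blast
      define U' where "U' s = (if s < r then U s else u)" for s
      show ?thesis
      proof (rule exI[where x="Suc r"], rule exI[where x=U'], intro allI impI)
        fix i j assume "i < d" "j < d"
        then have "A i j = A' i j + u i * cnj (u j)" unfolding A'_def by simp
        also have "\<dots> = (\<Sum>s<r. U' s i * cnj (U' s j)) + U' r i * cnj (U' r j)"
          using U \<open>i < d\<close> \<open>j < d\<close> by (simp add: U'_def)
        finally show "A i j = (\<Sum>s<Suc r. U' s i * cnj (U' s j))" by simp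
      qed
    qed
  qed
qed

lemma psdf_decomp:
  assumes "psdf d A"
  shows "\<exists>(r::nat) U. \<forall>i<d. \<forall>j<d. A i j = (\<Sum>s<r. U s i * cnj (U s j))"
  using decomp_aux[of d d] assms by auto




lemma kron_entry:
  assumes "A \<in> carrier_mat k k" "B \<in> carrier_mat m m" "P < k*m" "Q < k*m"
  shows "kron A B $$ (P,Q) = A $$ (P div m, Q div m) * B $$ (P mod m, Q mod m)"
  using assms unfolding kron_def by simp

lemma mat_unit_entry:
  assumes "P < k" "Q < k"
  shows "mat_unit k i j $$ (P,Q) = (if P = i \<and> Q = j then 1 else 0)"
  using assms unfolding mat_unit_def by simp

lemma mat_unit_carrier[simp]: "mat_unit k i j \<in> carrier_mat k k"
  unfolding mat_unit_def by simp

lemma sum4_delta: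
  assumes "a < (k::nat)" "b < k"
  shows "(\<Sum>i<k. \<Sum>j<k. \<Sum>p<(n::nat). \<Sum>q<n. (if i = a \<and> j = b then F i j p q else (0::complex)))
       = (\<Sum>p<n. \<Sum>q<n. F a b p q)"
proof -
  have "(\<Sum>i<k. \<Sum>j<k. \<Sum>p<(n::nat). \<Sum>q<n. (if i = a \<and> j = b then F i j p q else (0::complex)))
     = (\<Sum>j<k. \<Sum>p<(n::nat). \<Sum>q<n. (if a = a \<and> j = b then F a j p q else (0::complex)))"
    using sum_one[OF assms(1), where g="\<lambda>i. \<Sum>j<k. \<Sum>p<(n::nat). \<Sum>q<n. (if i = a \<and> j = b then F i j p q else (0::complex))"]
    by simp
  also have "\<dots> = (\<Sum>p<(n::nat). \<Sum>q<n. (if a = a \<and> b = b then F a b p q else (0::complex)))"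
    using sum_one[OF assms(2), where g="\<lambda>j. \<Sum>p<(n::nat). \<Sum>q<n. (if a = a \<and> j = b then F a j p q else (0::complex))"]
    by simp
  finally show ?thesis by simp
qed

lemma IT_entry:
  assumes L: "\<And>p q. p < n \<Longrightarrow> q < n \<Longrightarrow> L (mat_unit n p q) \<in> carrier_mat m m"
    and PQ: "P < k*m" "Q < k*m"
  shows "id_tensor k n m L \<rho> $$ (P,Q) =
    (\<Sum>p<n. \<Sum>q<n. \<rho> $$ (P div m * n + p, Q div m * n + q) * L (mat_unit n p q) $$ (P mod m, Q mod m))"
proof -
  have m0: "m > 0" using PQ by (cases m) auto
  have Pk: "P div m < k" "Q div m < k" using PQ m0 by (auto simp: less_mult_imp_div_less)
  have "id_tensor k n m L \<rho> $$ (P,Q) =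
     (\<Sum>i<k. \<Sum>j<k. \<Sum>p<n. \<Sum>q<n. \<rho> $$ (i*n + p, j*n + q) *
         kron (mat_unit k i j) (L (mat_unit n p q)) $$ (P,Q))"
    using PQ unfolding id_tensor_def map_tensor_def by simp
  also have "\<dots> = (\<Sum>i<k. \<Sum>j<k. \<Sum>p<n. \<Sum>q<n.
      (if i = P div m \<and> j = Q div m then
        \<rho> $$ (i*n + p, j*n + q) * L (mat_unit n p q) $$ (P mod m, Q mod m) else 0))"
  proof (intro sum.cong refl)
    fix i j p q assume "i \<in> {..<k}" "j \<in> {..<k}" "p \<in> {..<n}" "q \<in> {..<n}"
    then show "\<rho> $$ (i*n + p, j*n + q) * kron (mat_unit k i j) (L (mat_unit n p q)) $$ (P,Q) =
      (if i = P div m \<and> j = Q div m then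
        \<rho> $$ (i*n + p, j*n + q) * L (mat_unit n p q) $$ (P mod m, Q mod m) else 0)"
      using kron_entry[OF mat_unit_carrier L PQ] mat_unit_entry[OF Pk] by auto
  qed
  also have "\<dots> = (\<Sum>p<n. \<Sum>q<n. \<rho> $$ (P div m * n + p, Q div m * n + q) * L (mat_unit n p q) $$ (P mod m, Q mod m))"
    by (rule sum4_delta[OF Pk])
  finally show ?thesis .
qed




lemma sum6_perm:
  "(\<Sum>i<(k::nat). \<Sum>x<(m::nat). \<Sum>j<k. \<Sum>y<m. \<Sum>p<(n::nat). \<Sum>q<n. F i x j y p q) =
   (\<Sum>p<n. \<Sum>x<m. \<Sum>q<n. \<Sum>y<m. \<Sum>i<k. \<Sum>j<k. (F i x j y p q :: 'a::comm_monoid_add))"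
  apply (simp add: sum.cartesian_product)
  apply (rule sum.reindex_bij_witness[where i="\<lambda>(p,x,q,y,i,j). (i,x,j,y,p,q)" and j="\<lambda>(i,x,j,y,p,q). (p,x,q,y,i,j)"])
  apply auto
  done

definition choiform :: "nat \<Rightarrow> nat \<Rightarrow> (nat \<Rightarrow> nat \<Rightarrow> nat \<Rightarrow> nat \<Rightarrow> complex) \<Rightarrow> (nat \<Rightarrow> nat \<Rightarrow> complex) \<Rightarrow> complex" where
  "choiform n m C f = (\<Sum>p<n. \<Sum>x<m. \<Sum>q<n. \<Sum>y<m. cnj (f p x) * C p q x y * f q y)"

definition Phi :: "nat \<Rightarrow> nat \<Rightarrow> nat \<Rightarrow> (nat \<Rightarrow> nat \<Rightarrow> nat \<Rightarrow> nat \<Rightarrow> complex) \<Rightarrow> (nat \<Rightarrow> nat \<Rightarrow> complex)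
   \<Rightarrow> (nat \<Rightarrow> nat \<Rightarrow> complex) \<Rightarrow> complex" where
  "Phi k n m C v R = (\<Sum>i<k. \<Sum>x<m. \<Sum>j<k. \<Sum>y<m.
      cnj (v i x) * (\<Sum>p<n. \<Sum>q<n. R (i*n+p) (j*n+q) * C p q x y) * v j y)"

lemma Phi_add: "Phi k n m C v (\<lambda>I J. R1 I J + R2 I J) = Phi k n m C v R1 + Phi k n m C v R2"
  unfolding Phi_def by (simp add: distrib_left distrib_right sum.distrib)

lemma Phi_zero: "Phi k n m C v (\<lambda>I J. 0) = 0"
  unfolding Phi_def by simp

lemma Phi_sum: "Phi k n m C v (\<lambda>I J. \<Sum>s<(r::nat). h s I J) = (\<Sum>s<r. Phi k n m C v (h s))"
proof (induction r)
  case 0 then show ?case by (simp add: Phi_zero)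
next
  case (Suc r)
  have "Phi k n m C v (\<lambda>I J. \<Sum>s<Suc r. h s I J) = Phi k n m C v (\<lambda>I J. (\<Sum>s<r. h s I J) + h r I J)"
    by simp
  also have "\<dots> = Phi k n m C v (\<lambda>I J. \<Sum>s<r. h s I J) + Phi k n m C v (h r)"
    by (rule Phi_add)
  finally show ?case using Suc by simp
qed

lemma Phi_rank1:
  "Phi k n m C v (\<lambda>I J. u I * cnj (u J)) =
   choiform n m C (\<lambda>p x. \<Sum>i<k. cnj (u (i*n+p)) * v i x)"
proof -
  have "Phi k n m C v (\<lambda>I J. u I * cnj (u J)) =
    (\<Sum>i<k. \<Sum>x<m. \<Sum>j<k. \<Sum>y<m. \<Sum>p<n. \<Sum>q<n.
       (u (i*n+p) * cnj (v i x)) * C p q x y * (cnj (u (j*n+q)) * v j y))"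
    unfolding Phi_def by (simp add: sum_distrib_left sum_distrib_right mult_ac)
  also have "\<dots> = (\<Sum>p<n. \<Sum>x<m. \<Sum>q<n. \<Sum>y<m. \<Sum>i<k. \<Sum>j<k.
       (u (i*n+p) * cnj (v i x)) * C p q x y * (cnj (u (j*n+q)) * v j y))"
    by (rule sum6_perm)
  also have "\<dots> = choiform n m C (\<lambda>p x. \<Sum>i<k. cnj (u (i*n+p)) * v i x)"
    unfolding choiform_def by (simp add: sum_distrib_left sum_distrib_right mult_ac)
  finally show ?thesis .
qed

lemma idx_lt: "i < (k::nat) \<Longrightarrow> p < n \<Longrightarrow> i*n+p < k*n"
proof -
  assume "i < k" "p < n"
  then have "i*n + p < Suc i * n" by simp
  also have "\<dots> \<le> k * n" using \<open>i < k\<close> by (intro mult_le_mono1) simp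
  finally show ?thesis .
qed

lemma dm_div: "x < (m::nat) \<Longrightarrow> (i*m + x) div m = i" by simp
lemma dm_mod: "x < (m::nat) \<Longrightarrow> (i*m + x) mod m = x" by simp

lemma Phi_cong:
  assumes "\<And>I J. I < k*n \<Longrightarrow> J < k*n \<Longrightarrow> R I J = R' I J"
  shows "Phi k n m C v R = Phi k n m C v R'"
  unfolding Phi_def using assms by (auto intro!: sum.cong simp: idx_lt)

lemma loew_form:
  assumes "X \<in> carrier_mat d d" "Y \<in> carrier_mat d d"
  shows "loewner_le X (c \<cdot>\<^sub>m Y) \<longleftrightarrow>
    (\<forall>f. 0 \<le> (\<Sum>i<d. \<Sum>j<d. cnj (f i) * (c * Y $$ (i,j) - X $$ (i,j)) * f j))"
proof -
  have c: "c \<cdot>\<^sub>m Y - X \<in> carrier_mat d d" using assms unfolding carrier_mat_def by simp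
  have "loewner_le X (c \<cdot>\<^sub>m Y) \<longleftrightarrow> psd (c \<cdot>\<^sub>m Y - X)"
    unfolding loewner_le_def using assms by simp
  also have "\<dots> \<longleftrightarrow> (\<forall>f. 0 \<le> (\<Sum>i<d. \<Sum>j<d. cnj (f i) * (c \<cdot>\<^sub>m Y - X) $$ (i,j) * f j))"
    by (rule psd_form[OF c])
  also have "\<dots> \<longleftrightarrow> (\<forall>f. 0 \<le> (\<Sum>i<d. \<Sum>j<d. cnj (f i) * (c * Y $$ (i,j) - X $$ (i,j)) * f j))"
    by (intro iff_allI arg_cong[where f="\<lambda>z. 0 \<le> z"] sum.cong refl) (use assms in auto)
  finally show ?thesis .
qed

lemma IT_carrier[simp]: "id_tensor k n m L \<rho> \<in> carrier_mat (k*m) (k*m)"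
  unfolding id_tensor_def map_tensor_def by simp

lemma psd_psdf:
  assumes "A \<in> carrier_mat d d" "psd A"
  shows "psdf d (\<lambda>i j. A $$ (i,j))"
  using assms psd_form[OF assms(1)] unfolding psdf_def form_def by simp

lemma E2:
  assumes rho: "\<rho> \<in> carrier_mat (k*n) (k*n)" "psd \<rho>"
    and LM: "\<And>p q. p < n \<Longrightarrow> q < n \<Longrightarrow> M (mat_unit n p q) \<in> carrier_mat m m"
    and LN: "\<And>p q. p < n \<Longrightarrow> q < n \<Longrightarrow> N (mat_unit n p q) \<in> carrier_mat m m"
    and cp: "\<forall>f. 0 \<le> choiform n m (\<lambda>p q x y. c * M (mat_unit n p q) $$ (x,y) - N (mat_unit n p q) $$ (x,y)) f"
  shows "loewner_le (id_tensor k n m N \<rho>) (c \<cdot>\<^sub>m id_tensor k n m M \<rho>)"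
proof -
  define C where "C p q x y = c * M (mat_unit n p q) $$ (x,y) - N (mat_unit n p q) $$ (x,y)" for p q x y
  have ent: "c * id_tensor k n m M \<rho> $$ (P,Q) - id_tensor k n m N \<rho> $$ (P,Q) =
     (\<Sum>p<n. \<Sum>q<n. \<rho> $$ (P div m * n + p, Q div m * n + q) * C p q (P mod m) (Q mod m))"
    if "P < k*m" "Q < k*m" for P Q
  proof -
    have e1: "id_tensor k n m M \<rho> $$ (P,Q) = (\<Sum>p<n. \<Sum>q<n. \<rho> $$ (P div m * n + p, Q div m * n + q) * M (mat_unit n p q) $$ (P mod m, Q mod m))"
      by (rule IT_entry) (use LM that in auto)
    have e2: "id_tensor k n m N \<rho> $$ (P,Q) = (\<Sum>p<n. \<Sum>q<n. \<rho> $$ (P div m * n + p, Q div m * n + q) * N (mat_unit n p q) $$ (P mod m, Q mod m))"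
      by (rule IT_entry) (use LN that in auto)
    show ?thesis unfolding e1 e2 C_def
      by (simp add: sum_distrib_left sum_subtractf[symmetric] algebra_simps)
  qed
  obtain r :: nat and U where U: "\<forall>I<k*n. \<forall>J<k*n. \<rho> $$ (I,J) = (\<Sum>s<r. U s I * cnj (U s J))"
    using psdf_decomp[OF psd_psdf[OF rho]] by blast
  show ?thesis
    unfolding loew_form[OF IT_carrier IT_carrier]
  proof
    fix f :: "nat \<Rightarrow> complex"
    define v where "v i x = f (i*m + x)" for i x
    have "(\<Sum>P<k*m. \<Sum>Q<k*m. cnj (f P) * (c * id_tensor k n m M \<rho> $$ (P,Q) - id_tensor k n m N \<rho> $$ (P,Q)) * f Q)
        = (\<Sum>P<k*m. \<Sum>Q<k*m. cnj (f P) *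
            (\<Sum>p<n. \<Sum>q<n. \<rho> $$ (P div m * n + p, Q div m * n + q) * C p q (P mod m) (Q mod m)) * f Q)"
      by (intro sum.cong refl) (simp add: ent)
    also have "\<dots> = Phi k n m C v (\<lambda>I J. \<rho> $$ (I,J))"
      unfolding Phi_def v_def sum_split_mult by (simp add: dm_div dm_mod)
    also have "\<dots> = Phi k n m C v (\<lambda>I J. \<Sum>s<r. U s I * cnj (U s J))"
      by (rule Phi_cong) (use U in auto)
    also have "\<dots> = (\<Sum>s<r. choiform n m C (\<lambda>p x. \<Sum>i<k. cnj (U s (i*n+p)) * v i x))"
      unfolding Phi_sum Phi_rank1 ..
    finally have eq: "(\<Sum>P<k*m. \<Sum>Q<k*m. cnj (f P) * (c * id_tensor k n m M \<rho> $$ (P,Q) - id_tensor k n m N \<rho> $$ (P,Q)) * f Q)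
        = (\<Sum>s<r. choiform n m C (\<lambda>p x. \<Sum>i<k. cnj (U s (i*n+p)) * v i x))" .
    have "0 \<le> (\<Sum>s<r. choiform n m C (\<lambda>p x. \<Sum>i<k. cnj (U s (i*n+p)) * v i x))"
      using cp unfolding C_def[symmetric] by (intro sum_nonneg) auto
    then show "0 \<le> (\<Sum>P<k*m. \<Sum>Q<k*m. cnj (f P) * (c * id_tensor k n m M \<rho> $$ (P,Q) - id_tensor k n m N \<rho> $$ (P,Q)) * f Q)"
      using eq by simp
  qed
qed




lemma IT_diff_entry:
  assumes LM: "\<And>p q. p < n \<Longrightarrow> q < n \<Longrightarrow> M (mat_unit n p q) \<in> carrier_mat m m"
    and LN: "\<And>p q. p < n \<Longrightarrow> q < n \<Longrightarrow> N (mat_unit n p q) \<in> carrier_mat m m"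
    and that: "P < k*m" "Q < k*m"
  shows "c * id_tensor k n m M \<rho> $$ (P,Q) - id_tensor k n m N \<rho> $$ (P,Q) =
     (\<Sum>p<n. \<Sum>q<n. \<rho> $$ (P div m * n + p, Q div m * n + q) *
        (c * M (mat_unit n p q) $$ (P mod m, Q mod m) - N (mat_unit n p q) $$ (P mod m, Q mod m)))"
proof -
  have e1: "id_tensor k n m M \<rho> $$ (P,Q) = (\<Sum>p<n. \<Sum>q<n. \<rho> $$ (P div m * n + p, Q div m * n + q) * M (mat_unit n p q) $$ (P mod m, Q mod m))"
    by (rule IT_entry) (use LM that in auto)
  have e2: "id_tensor k n m N \<rho> $$ (P,Q) = (\<Sum>p<n. \<Sum>q<n. \<rho> $$ (P div m * n + p, Q div m * n + q) * N (mat_unit n p q) $$ (P mod m, Q mod m))"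
    by (rule IT_entry) (use LN that in auto)
  show ?thesis unfolding e1 e2
    by (simp add: sum_distrib_left sum_subtractf[symmetric] algebra_simps)
qed

lemma sum2_delta:
  assumes "a < (n::nat)" "b < n"
  shows "(\<Sum>p<n. \<Sum>q<n. (if p = a \<and> q = b then F p q else (0::complex))) = F a b"
proof -
  have "(\<Sum>p<n. \<Sum>q<n. (if p = a \<and> q = b then F p q else (0::complex)))
     = (\<Sum>q<n. (if a = a \<and> q = b then F a q else (0::complex)))"
    using sum_one[OF assms(1), where g="\<lambda>p. \<Sum>q<n. (if p = a \<and> q = b then F p q else (0::complex))"]
    by simp
  also have "\<dots> = F a b"
    using sum_one[OF assms(2), where g="\<lambda>q. (if a = a \<and> q = b then F a q else (0::complex))"]
    by simp
  finally show ?thesis .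
qed

definition w0 :: "nat \<Rightarrow> nat \<Rightarrow> complex" where
  "w0 n I = (if I div n = I mod n then complex_of_real (1 / sqrt (real n)) else 0)"

definition Phi0 :: "nat \<Rightarrow> complex mat" where
  "Phi0 n = mat (n*n) (n*n) (\<lambda>(I,J). w0 n I * cnj (w0 n J))"

lemma Phi0_entry:
  assumes "i < n" "p < n" "j < n" "q < n"
  shows "Phi0 n $$ (i*n+p, j*n+q) = (if i = p \<and> j = q then 1 / of_nat n else 0)"
proof -
  have "i*n+p < n*n" "j*n+q < n*n" using idx_lt assms by auto
  then have "Phi0 n $$ (i*n+p, j*n+q) = w0 n (i*n+p) * cnj (w0 n (j*n+q))"
    unfolding Phi0_def by simp
  also have "\<dots> = (if i = p \<and> j = q then 1 / of_nat n else 0)"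
  proof -
    have r: "(1 / sqrt (real n)) * (1 / sqrt (real n)) = 1 / real n" by simp
    have ss: "complex_of_real (1 / sqrt (real n)) * cnj (complex_of_real (1 / sqrt (real n))) = 1 / of_nat n"
      by (simp only: complex_cnj_complex_of_real of_real_mult[symmetric] r) simp
    show ?thesis using assms ss unfolding w0_def by (simp add: dm_div dm_mod)
  qed
  finally show ?thesis .
qed

lemma Phi0_density:
  assumes "n > 0"
  shows "density (n*n) (Phi0 n)"
  unfolding density_def
proof (intro conjI)
  show carr: "Phi0 n \<in> carrier_mat (n*n) (n*n)" unfolding Phi0_def by simp
  have "mtrace (Phi0 n) = (\<Sum>I<n*n. Phi0 n $$ (I,I))" unfolding mtrace_def Phi0_def by simp
  also have "\<dots> = (\<Sum>i<n. \<Sum>p<n. Phi0 n $$ (i*n+p, i*n+p))" by (rule sum_split_mult)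
  also have "\<dots> = (\<Sum>i<n. \<Sum>p<n. (if p = i then 1 / of_nat n else 0))"
    by (intro sum.cong refl) (auto simp: Phi0_entry)
  also have "\<dots> = 1" using assms by simp
  finally show "mtrace (Phi0 n) = 1" .
  show "psd (Phi0 n)"
    unfolding psd_form[OF carr]
  proof
    fix f :: "nat \<Rightarrow> complex"
    have "(\<Sum>i<n*n. \<Sum>j<n*n. cnj (f i) * Phi0 n $$ (i,j) * f j)
        = (\<Sum>i<n*n. \<Sum>j<n*n. (cnj (f i) * w0 n i) * (cnj (w0 n j) * f j))"
      unfolding Phi0_def by (intro sum.cong refl) (simp add: mult_ac)
    also have "\<dots> = (\<Sum>i<n*n. cnj (f i) * w0 n i) * (\<Sum>j<n*n. cnj (w0 n j) * f j)"
      by (simp add: sum_product)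
    also have "(\<Sum>i<n*n. cnj (f i) * w0 n i) = cnj (\<Sum>j<n*n. cnj (w0 n j) * f j)"
      by (simp add: mult.commute)
    finally have eq: "(\<Sum>i<n*n. \<Sum>j<n*n. cnj (f i) * Phi0 n $$ (i,j) * f j)
       = cnj (\<Sum>j<n*n. cnj (w0 n j) * f j) * (\<Sum>j<n*n. cnj (w0 n j) * f j)" .
    show "0 \<le> (\<Sum>i<n*n. \<Sum>j<n*n. cnj (f i) * Phi0 n $$ (i,j) * f j)"
    proof -
      have nn: "0 \<le> cnj z * z" for z :: complex
      proof -
        have "cnj z * z = of_real ((cmod z)^2)" by (metis complex_norm_square mult.commute)
        then show ?thesis by (simp add: less_eq_complex_def)
      qed
      show ?thesis unfolding eq by (rule nn)
    qed
  qed
qed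

lemma E3:
  assumes n: "n > 0"
    and LM: "\<And>p q. p < n \<Longrightarrow> q < n \<Longrightarrow> M (mat_unit n p q) \<in> carrier_mat m m"
    and LN: "\<And>p q. p < n \<Longrightarrow> q < n \<Longrightarrow> N (mat_unit n p q) \<in> carrier_mat m m"
    and le: "loewner_le (id_tensor n n m N (Phi0 n)) (c \<cdot>\<^sub>m id_tensor n n m M (Phi0 n))"
  shows "0 \<le> choiform n m (\<lambda>p q x y. c * M (mat_unit n p q) $$ (x,y) - N (mat_unit n p q) $$ (x,y)) f"
proof -
  define C where "C p q x y = c * M (mat_unit n p q) $$ (x,y) - N (mat_unit n p q) $$ (x,y)" for p q x y
  define h where "h P = f (P div m) (P mod m)" for P
  have pos: "0 \<le> (\<Sum>P<n*m. \<Sum>Q<n*m. cnj (h P) * (c * id_tensor n n m M (Phi0 n) $$ (P,Q) - id_tensor n n m N (Phi0 n) $$ (P,Q)) * h Q)"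
    using le unfolding loew_form[OF IT_carrier IT_carrier] by blast
  have ent: "c * id_tensor n n m M (Phi0 n) $$ (P,Q) - id_tensor n n m N (Phi0 n) $$ (P,Q) = C (P div m) (Q div m) (P mod m) (Q mod m) / of_nat n"
    if "P < n*m" "Q < n*m" for P Q
  proof -
    have m0: "m > 0" using that by (cases m) auto
    have Pk: "P div m < n" "Q div m < n" using that m0 by (auto simp: less_mult_imp_div_less)
    have "c * id_tensor n n m M (Phi0 n) $$ (P,Q) - id_tensor n n m N (Phi0 n) $$ (P,Q)
      = (\<Sum>p<n. \<Sum>q<n. Phi0 n $$ (P div m * n + p, Q div m * n + q) * C p q (P mod m) (Q mod m))"
      unfolding C_def by (rule IT_diff_entry) (use LM LN that in auto)
    also have "\<dots> = (\<Sum>p<n. \<Sum>q<n. (if p = P div m \<and> q = Q div m then C p q (P mod m) (Q mod m) / of_nat n else 0))"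
      by (intro sum.cong refl) (auto simp: Phi0_entry Pk)
    also have "\<dots> = C (P div m) (Q div m) (P mod m) (Q mod m) / of_nat n"
      by (rule sum2_delta[OF Pk])
    finally show ?thesis .
  qed
  have "(\<Sum>P<n*m. \<Sum>Q<n*m. cnj (h P) * (c * id_tensor n n m M (Phi0 n) $$ (P,Q) - id_tensor n n m N (Phi0 n) $$ (P,Q)) * h Q)
     = (\<Sum>P<n*m. \<Sum>Q<n*m. cnj (h P) * (C (P div m) (Q div m) (P mod m) (Q mod m) / of_nat n) * h Q)"
    by (intro sum.cong refl) (simp add: ent)
  also have "\<dots> = choiform n m C f / of_nat n"
    unfolding choiform_def h_def sum_split_mult by (simp add: dm_div dm_mod sum_divide_distrib)
  finally have "0 \<le> choiform n m C f / of_nat n" using pos by simp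
  then have "0 \<le> choiform n m C f / of_nat n * of_nat n"
    by (intro mult_nonneg_nonneg) (auto simp: less_eq_complex_def)
  then show ?thesis unfolding C_def using n by simp
qed




lemma eq_idx:
  assumes "i < (m::nat)" "j < m"
  shows "(z*m + i = w*m + j) \<longleftrightarrow> (z = w \<and> i = j)"
proof
  assume h: "z*m + i = w*m + j"
  have "z = w" using arg_cong[OF h, of "\<lambda>t. t div m"] assms by (simp add: dm_div)
  moreover have "i = j" using arg_cong[OF h, of "\<lambda>t. t mod m"] assms by (simp add: dm_mod)
  ultimately show "z = w \<and> i = j" ..
qed simp

lemma pi_bound:
  assumes "rA < a'" "x < a" "rB < b'" "y < b"
  shows "((rA*a+x)*b'+rB)*b+y < a'*a*b'*(b::nat)"
  using idx_lt[OF idx_lt[OF idx_lt[OF assms(1,2)] assms(3)] assms(4)] .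

lemma pi_dec:
  assumes "x < (a::nat)" "rB < b'" "y < b"
  shows "(((rA*a+x)*b'+rB)*b+y) mod b = y"
    "((((rA*a+x)*b'+rB)*b+y) div b) mod b' = rB"
    "((((rA*a+x)*b'+rB)*b+y) div (b*b')) mod a = x"
    "(((rA*a+x)*b'+rB)*b+y) div (b*b'*a) = rA"
  using assms by (simp_all add: div_mult2_eq dm_div dm_mod)

lemma ptrace_unit:
  assumes "pA < a'" "qA < a'" "pB < b'" "qB < b'"
  shows "ptrace_first a' b' (mat_unit (a'*b') (pA*b'+pB) (qA*b'+qB)) =
    (if pA = qA then mat_unit b' pB qB else 0\<^sub>m b' b')"
proof (rule eq_matI)
  fix i j assume ij: "i < dim_row (if pA = qA then mat_unit b' pB qB else 0\<^sub>m b' b')"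
    "j < dim_col (if pA = qA then mat_unit b' pB qB else 0\<^sub>m b' b')"
  then have i: "i < b'" and j: "j < b'" by (auto simp: mat_unit_def split: if_splits)
  have "ptrace_first a' b' (mat_unit (a'*b') (pA*b'+pB) (qA*b'+qB)) $$ (i,j)
     = (\<Sum>z<a'. mat_unit (a'*b') (pA*b'+pB) (qA*b'+qB) $$ (z*b'+i, z*b'+j))"
    unfolding ptrace_first_def using i j by simp
  also have "\<dots> = (\<Sum>z<a'. if z = pA then (if pA = qA \<and> i = pB \<and> j = qB then 1 else 0) else 0)"
  proof (rule sum.cong[OF refl])
    fix z assume "z \<in> {..<a'}"
    then have zi: "z*b'+i < a'*b'" "z*b'+j < a'*b'" using idx_lt i j by auto
    show "mat_unit (a'*b') (pA*b'+pB) (qA*b'+qB) $$ (z*b'+i, z*b'+j) =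
        (if z = pA then (if pA = qA \<and> i = pB \<and> j = qB then 1 else 0) else 0)"
      using mat_unit_entry[OF zi] eq_idx[OF i assms(3), of z pA] eq_idx[OF j assms(4), of z qA] by auto
  qed
  also have "\<dots> = (if pA = qA \<and> i = pB \<and> j = qB then 1 else 0)" using assms by simp
  also have "\<dots> = (if pA = qA then mat_unit b' pB qB else 0\<^sub>m b' b') $$ (i,j)"
    using i j by (auto simp: mat_unit_def)
  finally show "ptrace_first a' b' (mat_unit (a'*b') (pA*b'+pB) (qA*b'+qB)) $$ (i,j) =
      (if pA = qA then mat_unit b' pB qB else 0\<^sub>m b' b') $$ (i,j)" .
qed (auto simp: ptrace_first_def mat_unit_def)

lemma chan_zero:
  assumes "is_channel n m Q"
  shows "Q (0\<^sub>m n n) = 0\<^sub>m m m"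
proof -
  have lin: "is_linear_map n m Q" using assms unfolding is_channel_def is_CP_def by simp
  have z: "0\<^sub>m n n \<in> carrier_mat n n" by simp
  have c: "Q (0\<^sub>m n n) \<in> carrier_mat m m" using lin z unfolding is_linear_map_def by blast
  have "(0::complex) \<cdot>\<^sub>m 0\<^sub>m n n = 0\<^sub>m n n" by (rule eq_matI) auto
  then have "Q (0\<^sub>m n n) = 0 \<cdot>\<^sub>m Q (0\<^sub>m n n)" using lin z unfolding is_linear_map_def by metis
  also have "\<dots> = 0\<^sub>m m m" using c by (intro eq_matI) auto
  finally show ?thesis .
qed

lemma choi_entry:
  assumes "rA < a'" "x < a" "rB < b'" "y < b" "rA2 < a'" "x2 < a" "rB2 < b'" "y2 < b"
  shows "choi a' b' a b N $$ (((rA*a+x)*b'+rB)*b+y, ((rA2*a+x2)*b'+rB2)*b+y2) =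
    1 / (of_nat a' * of_nat b') * N (mat_unit (a'*b') (rA*b'+rB) (rA2*b'+rB2)) $$ (x*b+y, x2*b+y2)"
  using pi_bound[OF assms(1-4)] pi_bound[OF assms(5-8)] pi_dec[OF assms(2-4)] pi_dec[OF assms(6-8)]
  unfolding choi_def by (simp add: Let_def)

lemma CM_entry:
  assumes chQ: "is_channel b' b Q0"
    and ns: "\<forall>X \<in> carrier_mat (a'*b') (a'*b'). ptrace_first a b (N X) = Q0 (ptrace_first a' b' X)"
    and idx: "rA < a'" "x < a" "rB < b'" "y < b" "rA2 < a'" "x2 < a" "rB2 < b'" "y2 < b"
  shows "kron (1\<^sub>m a) (ptrace_first a b (N (mat_unit (a'*b') (rA*b'+rB) (rA2*b'+rB2)))) $$ (x*b+y, x2*b+y2)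
     = (if x = x2 \<and> rA = rA2 then Q0 (mat_unit b' rB rB2) $$ (y,y2) else 0)"
proof -
  have i1: "x*b+y < a*b" "x2*b+y2 < a*b" using idx_lt idx by auto
  have "kron (1\<^sub>m a) (ptrace_first a b (N (mat_unit (a'*b') (rA*b'+rB) (rA2*b'+rB2)))) $$ (x*b+y, x2*b+y2)
     = 1\<^sub>m a $$ (x, x2) * ptrace_first a b (N (mat_unit (a'*b') (rA*b'+rB) (rA2*b'+rB2))) $$ (y, y2)"
    using kron_entry[OF one_carrier_mat _ i1, of "ptrace_first a b (N (mat_unit (a'*b') (rA*b'+rB) (rA2*b'+rB2)))"]
      idx by (simp add: ptrace_first_def dm_div dm_mod)
  also have "\<dots> = 1\<^sub>m a $$ (x, x2) * Q0 (if rA = rA2 then mat_unit b' rB rB2 else 0\<^sub>m b' b') $$ (y, y2)"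
    using ns ptrace_unit[OF idx(1,5,3,7)] by simp
  finally show ?thesis using idx chan_zero[OF chQ] by (cases "rA = rA2"; cases "x = x2") auto
qed

lemma sigma_entry:
  assumes chQ: "is_channel b' b Q0"
    and ns: "\<forall>X \<in> carrier_mat (a'*b') (a'*b'). ptrace_first a b (N X) = Q0 (ptrace_first a' b' X)"
    and idx: "rA < a'" "x < a" "rB < b'" "y < b" "rA2 < a'" "x2 < a" "rB2 < b'" "y2 < b"
  shows "kron (1\<^sub>m (a'*a)) (ptrace_first (a'*a) (b'*b) (choi a' b' a b N))
      $$ (((rA*a+x)*b'+rB)*b+y, ((rA2*a+x2)*b'+rB2)*b+y2)
     = (if rA = rA2 \<and> x = x2 then of_nat a' / (of_nat a' * of_nat b') * Q0 (mat_unit b' rB rB2) $$ (y,y2) else 0)"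
proof -
  have e1: "((rA*a+x)*b'+rB)*b+y = (rA*a+x)*(b'*b) + (rB*b+y)" by (simp add: algebra_simps)
  have e2: "((rA2*a+x2)*b'+rB2)*b+y2 = (rA2*a+x2)*(b'*b) + (rB2*b+y2)" by (simp add: algebra_simps)
  have j1: "rB*b+y < b'*b" "rB2*b+y2 < b'*b" using idx_lt idx by auto
  have k1: "rA*a+x < a'*a" "rA2*a+x2 < a'*a" using idx_lt idx by auto
  have i1: "(rA*a+x)*(b'*b) + (rB*b+y) < (a'*a)*(b'*b)" "(rA2*a+x2)*(b'*b) + (rB2*b+y2) < (a'*a)*(b'*b)"
    using idx_lt k1 j1 by auto
  have "kron (1\<^sub>m (a'*a)) (ptrace_first (a'*a) (b'*b) (choi a' b' a b N))
      $$ (((rA*a+x)*b'+rB)*b+y, ((rA2*a+x2)*b'+rB2)*b+y2)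
    = 1\<^sub>m (a'*a) $$ (rA*a+x, rA2*a+x2) * ptrace_first (a'*a) (b'*b) (choi a' b' a b N) $$ (rB*b+y, rB2*b+y2)"
    unfolding e1 e2
    using kron_entry[OF one_carrier_mat _ i1, of "ptrace_first (a'*a) (b'*b) (choi a' b' a b N)"] j1
    by (simp add: ptrace_first_def dm_div dm_mod)
  also have "1\<^sub>m (a'*a) $$ (rA*a+x, rA2*a+x2) = (if rA = rA2 \<and> x = x2 then 1 else 0)"
    using k1 eq_idx[OF idx(2,6)] by simp
  also have "ptrace_first (a'*a) (b'*b) (choi a' b' a b N) $$ (rB*b+y, rB2*b+y2)
    = (\<Sum>z<a'*a. choi a' b' a b N $$ (z*(b'*b) + (rB*b+y), z*(b'*b) + (rB2*b+y2)))"
    unfolding ptrace_first_def using j1 by simp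
  also have "\<dots> = (\<Sum>zA<a'. \<Sum>zx<a. choi a' b' a b N $$ (((zA*a+zx)*b'+rB)*b+y, ((zA*a+zx)*b'+rB2)*b+y2))"
    unfolding sum_split_mult by (intro sum.cong refl) (simp add: algebra_simps)
  also have "\<dots> = (\<Sum>zA<a'. \<Sum>zx<a. 1 / (of_nat a' * of_nat b') *
        N (mat_unit (a'*b') (zA*b'+rB) (zA*b'+rB2)) $$ (zx*b+y, zx*b+y2))"
    by (intro sum.cong refl) (simp add: choi_entry idx)
  also have "\<dots> = (\<Sum>zA<a'. 1 / (of_nat a' * of_nat b') *
        ptrace_first a b (N (mat_unit (a'*b') (zA*b'+rB) (zA*b'+rB2))) $$ (y, y2))"
    unfolding ptrace_first_def using idx by (simp add: sum_distrib_left)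
  also have "\<dots> = (\<Sum>zA<a'. 1 / (of_nat a' * of_nat b') * Q0 (mat_unit b' rB rB2) $$ (y, y2))"
  proof (rule sum.cong[OF refl])
    fix zA assume "zA \<in> {..<a'}"
    then have "ptrace_first a b (N (mat_unit (a'*b') (zA*b'+rB) (zA*b'+rB2))) = Q0 (mat_unit b' rB rB2)"
      using ns ptrace_unit[of zA a' zA rB b' rB2] idx by simp
    then show "1 / (of_nat a' * of_nat b') * ptrace_first a b (N (mat_unit (a'*b') (zA*b'+rB) (zA*b'+rB2))) $$ (y, y2)
      = 1 / (of_nat a' * of_nat b') * Q0 (mat_unit b' rB rB2) $$ (y, y2)" by simp
  qed
  also have "\<dots> = of_nat a' / (of_nat a' * of_nat b') * Q0 (mat_unit b' rB rB2) $$ (y, y2)"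
    by simp
  finally show ?thesis by simp
qed




lemma perm_form:
  assumes K: "\<And>rA x rB y rA2 x2 rB2 y2. rA < a' \<Longrightarrow> x < a \<Longrightarrow> rB < b' \<Longrightarrow> y < b \<Longrightarrow>
      rA2 < a' \<Longrightarrow> x2 < a \<Longrightarrow> rB2 < b' \<Longrightarrow> y2 < b \<Longrightarrow>
      K (((rA*a+x)*b'+rB)*b+y) (((rA2*a+x2)*b'+rB2)*b+y2) = C (rA*b'+rB) (rA2*b'+rB2) (x*b+y) (x2*b+y2)"
    and g: "\<And>rA x rB y. rA < a' \<Longrightarrow> x < a \<Longrightarrow> rB < b' \<Longrightarrow> y < b \<Longrightarrow>
      g (((rA*a+x)*b'+rB)*b+y) = f (rA*b'+rB) (x*b+y)"
  shows "(\<Sum>P<a'*a*b'*b. \<Sum>Q<a'*a*b'*b. cnj (g P) * K P Q * g Q) = choiform (a'*b') (a*(b::nat)) C f"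
proof -
  have sw: "\<And>G. (\<Sum>rA<a'. \<Sum>x<a. \<Sum>rB<b'. \<Sum>y<b. G rA x rB y) = (\<Sum>rA<a'. \<Sum>rB<b'. \<Sum>x<a. \<Sum>y<b. (G rA x rB y :: complex))"
    by (rule sum.cong[OF refl], rule sum.swap)
  have "(\<Sum>P<a'*a*b'*b. \<Sum>Q<a'*a*b'*b. cnj (g P) * K P Q * g Q) =
    (\<Sum>rA<a'. \<Sum>x<a. \<Sum>rB<b'. \<Sum>y<b. \<Sum>rA2<a'. \<Sum>x2<a. \<Sum>rB2<b'. \<Sum>y2<b.
      cnj (g (((rA*a+x)*b'+rB)*b+y)) * K (((rA*a+x)*b'+rB)*b+y) (((rA2*a+x2)*b'+rB2)*b+y2) * g (((rA2*a+x2)*b'+rB2)*b+y2))"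
    by (simp only: sum_split_mult)
  also have "\<dots> = (\<Sum>rA<a'. \<Sum>x<a. \<Sum>rB<b'. \<Sum>y<b. \<Sum>rA2<a'. \<Sum>x2<a. \<Sum>rB2<b'. \<Sum>y2<b.
      cnj (f (rA*b'+rB) (x*b+y)) * C (rA*b'+rB) (rA2*b'+rB2) (x*b+y) (x2*b+y2) * f (rA2*b'+rB2) (x2*b+y2))"
    by (intro sum.cong refl) (simp add: K g)
  also have "\<dots> = (\<Sum>rA<a'. \<Sum>rB<b'. \<Sum>x<a. \<Sum>y<b. \<Sum>rA2<a'. \<Sum>rB2<b'. \<Sum>x2<a. \<Sum>y2<b.
      cnj (f (rA*b'+rB) (x*b+y)) * C (rA*b'+rB) (rA2*b'+rB2) (x*b+y) (x2*b+y2) * f (rA2*b'+rB2) (x2*b+y2))"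
    by (simp only: sw)
  also have "\<dots> = choiform (a'*b') (a*b) C f"
    unfolding choiform_def by (simp only: sum_split_mult)
  finally show ?thesis .
qed

lemma cnonneg_div_nat: "0 \<le> (z::complex) \<Longrightarrow> 0 \<le> z / of_nat k"
  by (simp add: less_eq_complex_def Re_divide_of_nat Im_divide_of_nat)

lemma cnonneg_mult_nat: "0 \<le> (z::complex) \<Longrightarrow> 0 \<le> z * of_nat k"
  by (simp add: less_eq_complex_def)

lemma kron_carrier:
  assumes "A \<in> carrier_mat n n" "B \<in> carrier_mat k k"
  shows "kron A B \<in> carrier_mat (n*k) (n*k)"
  using assms unfolding kron_def carrier_mat_def by simp

lemma ptrace_carrier: "ptrace_first dX dY \<rho> \<in> carrier_mat dY dY"
  unfolding ptrace_first_def by (rule mat_carrier)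

lemma choi_carrier: "choi a' b' a b N \<in> carrier_mat (a'*a*b'*b) (a'*a*b'*b)"
  unfolding choi_def by (rule mat_carrier)

lemma E1:
  fixes a' b' a b :: nat and c :: complex
  assumes pos: "a' > 0" "b' > 0" "a > 0" "b > 0"
    and chQ: "is_channel b' b Q0"
    and ns: "\<forall>X \<in> carrier_mat (a'*b') (a'*b'). ptrace_first a b (N X) = Q0 (ptrace_first a' b' X)"
  shows "loewner_le (choi a' b' a b N) ((c / of_nat a') \<cdot>\<^sub>m kron (1\<^sub>m (a'*a)) (ptrace_first (a'*a) (b'*b) (choi a' b' a b N)))
     \<longleftrightarrow> (\<forall>f. 0 \<le> choiform (a'*b') (a*b) (\<lambda>p q x y. c * kron (1\<^sub>m a) (ptrace_first a b (N (mat_unit (a'*b') p q))) $$ (x,y)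
            - N (mat_unit (a'*b') p q) $$ (x,y)) f)"
proof -
  define J where "J = choi a' b' a b N"
  define S where "S = kron (1\<^sub>m (a'*a)) (ptrace_first (a'*a) (b'*b) J)"
  define C where "C p q x y = c * kron (1\<^sub>m a) (ptrace_first a b (N (mat_unit (a'*b') p q))) $$ (x,y)
            - N (mat_unit (a'*b') p q) $$ (x,y)" for p q x y
  define C' where "C' p q x y = C p q x y / (of_nat a' * of_nat b')" for p q x y
  define K where "K P Q = c / of_nat a' * S $$ (P,Q) - J $$ (P,Q)" for P Q
  have cJ: "J \<in> carrier_mat (a'*a*b'*b) (a'*a*b'*b)" unfolding J_def by (rule choi_carrier)
  have cS0: "S \<in> carrier_mat ((a'*a)*(b'*b)) ((a'*a)*(b'*b))"
    unfolding S_def by (rule kron_carrier[OF one_carrier_mat ptrace_carrier])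
  have dd: "(a'*a)*(b'*b) = a'*a*b'*b" by (simp add: mult.assoc)
  have cS: "S \<in> carrier_mat (a'*a*b'*b) (a'*a*b'*b)" using cS0 unfolding dd .
  have Kent: "K (((rA*a+x)*b'+rB)*b+y) (((rA2*a+x2)*b'+rB2)*b+y2) = C' (rA*b'+rB) (rA2*b'+rB2) (x*b+y) (x2*b+y2)"
    if idx: "rA < a'" "x < a" "rB < b'" "y < b" "rA2 < a'" "x2 < a" "rB2 < b'" "y2 < b"
    for rA x rB y rA2 x2 rB2 y2
  proof -
    have a0: "(of_nat a' :: complex) \<noteq> 0" "(of_nat b' :: complex) \<noteq> 0" using pos by auto
    show ?thesis
      unfolding K_def C'_def C_def S_def J_def
      using sigma_entry[OF chQ ns idx] choi_entry[OF idx, of N] CM_entry[OF chQ ns idx] a0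
      by (cases "rA = rA2 \<and> x = x2") (auto simp: field_simps)
  qed
  have cf: "choiform (a'*b') (a*b) C' f = choiform (a'*b') (a*b) C f / (of_nat a' * of_nat b')" for f
    unfolding choiform_def C'_def by (simp add: sum_divide_distrib)
  have "loewner_le J ((c / of_nat a') \<cdot>\<^sub>m S) \<longleftrightarrow>
     (\<forall>g. 0 \<le> (\<Sum>P<a'*a*b'*b. \<Sum>Q<a'*a*b'*b. cnj (g P) * K P Q * g Q))"
    unfolding loew_form[OF cJ cS] K_def ..
  also have "\<dots> \<longleftrightarrow> (\<forall>f. 0 \<le> choiform (a'*b') (a*b) C f)"
  proof
    assume H: "\<forall>g. 0 \<le> (\<Sum>P<a'*a*b'*b. \<Sum>Q<a'*a*b'*b. cnj (g P) * K P Q * g Q)"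
    show "\<forall>f. 0 \<le> choiform (a'*b') (a*b) C f"
    proof
      fix f :: "nat \<Rightarrow> nat \<Rightarrow> complex"
      define g where "g P = f ((P div (b*b'*a))*b' + (P div b) mod b') (((P div (b*b')) mod a)*b + P mod b)" for P
      have "(\<Sum>P<a'*a*b'*b. \<Sum>Q<a'*a*b'*b. cnj (g P) * K P Q * g Q) = choiform (a'*b') (a*b) C' f"
        by (rule perm_form) (auto simp: Kent g_def pi_dec)
      moreover have "0 \<le> (\<Sum>P<a'*a*b'*b. \<Sum>Q<a'*a*b'*b. cnj (g P) * K P Q * g Q)" using H by blast
      ultimately have "0 \<le> choiform (a'*b') (a*b) C f / (of_nat a' * of_nat b')" using cf by simp
      then have "0 \<le> choiform (a'*b') (a*b) C f / (of_nat a' * of_nat b') * of_nat (a' * b')"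
        by (rule cnonneg_mult_nat)
      then show "0 \<le> choiform (a'*b') (a*b) C f" using pos by simp
    qed
  next
    assume H: "\<forall>f. 0 \<le> choiform (a'*b') (a*b) C f"
    show "\<forall>g. 0 \<le> (\<Sum>P<a'*a*b'*b. \<Sum>Q<a'*a*b'*b. cnj (g P) * K P Q * g Q)"
    proof
      fix g :: "nat \<Rightarrow> complex"
      define f where "f p X = g (((p div b' * a + X div b)*b' + p mod b')*b + X mod b)" for p X
      have "(\<Sum>P<a'*a*b'*b. \<Sum>Q<a'*a*b'*b. cnj (g P) * K P Q * g Q) = choiform (a'*b') (a*b) C' f"
        by (rule perm_form) (auto simp: Kent f_def dm_div dm_mod)
      also have "\<dots> = choiform (a'*b') (a*b) C f / of_nat (a' * b')" by (simp add: cf)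
      finally have eq: "(\<Sum>P<a'*a*b'*b. \<Sum>Q<a'*a*b'*b. cnj (g P) * K P Q * g Q) = choiform (a'*b') (a*b) C f / of_nat (a' * b')" .
      have "0 \<le> choiform (a'*b') (a*b) C f / of_nat (a' * b')"
        by (rule cnonneg_div_nat) (use H in blast)
      then show "0 \<le> (\<Sum>P<a'*a*b'*b. \<Sum>Q<a'*a*b'*b. cnj (g P) * K P Q * g Q)"
        unfolding eq .
    qed
  qed
  finally show ?thesis unfolding J_def S_def C_def .
qed




lemma INF_add_ereal:
  fixes f :: "'a \<Rightarrow> ereal"
  shows "(INF i\<in>I. f i) + ereal r = (INF i\<in>I. f i + ereal r)"
proof (rule antisym)
  show "(INF i\<in>I. f i) + ereal r \<le> (INF i\<in>I. f i + ereal r)"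
    by (rule INF_greatest) (intro add_right_mono INF_lower)
  have g: "f i = (f i + ereal r) + ereal (- r)" for i
    by (simp add: add.assoc)
  have "(INF i\<in>I. f i + ereal r) + ereal (- r) \<le> (INF i\<in>I. (f i + ereal r) + ereal (- r))"
    by (rule INF_greatest) (intro add_right_mono INF_lower)
  also have "\<dots> = (INF i\<in>I. f i)" using g by simp
  finally have "(INF i\<in>I. f i + ereal r) + ereal (- r) + ereal r \<le> (INF i\<in>I. f i) + ereal r"
    by (rule add_right_mono)
  then show "(INF i\<in>I. f i + ereal r) \<le> (INF i\<in>I. f i) + ereal r"
    by (simp add: add.assoc)
qed

lemma IT_cong:
  assumes "\<And>p q. p < n \<Longrightarrow> q < n \<Longrightarrow> L1 (mat_unit n p q) = L2 (mat_unit n p q)"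
  shows "id_tensor k n m L1 = id_tensor k n m L2"
  unfolding id_tensor_def map_tensor_def using assms
  by (intro ext eq_matI) (auto intro!: sum.cong)

lemma chan_carrier:
  assumes "is_channel n m Q" "X \<in> carrier_mat n n"
  shows "Q X \<in> carrier_mat m m"
  using assms unfolding is_channel_def is_CP_def is_linear_map_def by blast

lemma mtrace_unit:
  assumes "pA < a'" "qA < a'"
  shows "mtrace (mat_unit a' pA qA) = (if pA = qA then 1 else 0)"
proof -
  have "mtrace (mat_unit a' pA qA) = (\<Sum>i<a'. if i = pA then (if pA = qA then 1 else 0) else 0)"
    unfolding mtrace_def by (intro sum.cong) (auto simp: mat_unit_def)
  also have "\<dots> = (if pA = qA then 1 else 0)" using assms by simp
  finally show ?thesis .
qed

lemma map_tensor_unit: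
  assumes chQ: "is_channel b' b Q0"
    and ns: "\<forall>X \<in> carrier_mat (a'*b') (a'*b'). ptrace_first a b (N X) = Q0 (ptrace_first a' b' X)"
    and pq: "p < a'*b'" "q < a'*b'"
  shows "map_tensor a' a b' b (replace_one a) Q0 (mat_unit (a'*b') p q) =
     kron (1\<^sub>m a) (ptrace_first a b (N (mat_unit (a'*b') p q)))"
proof -
  have b0: "b' > 0" using pq by (cases b') auto
  define pA where "pA = p div b'"
  define pB where "pB = p mod b'"
  define qA where "qA = q div b'"
  define qB where "qB = q mod b'"
  have ix: "pA < a'" "qA < a'" "pB < b'" "qB < b'"
    using pq b0 unfolding pA_def qA_def pB_def qB_def by (auto simp: less_mult_imp_div_less)
  have p: "p = pA*b' + pB" and q: "q = qA*b'+qB"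
    unfolding pA_def qA_def pB_def qB_def by simp_all
  have rc: "replace_one a X \<in> carrier_mat a a" for X unfolding replace_one_def by simp
  have qc: "Q0 (mat_unit b' k l) \<in> carrier_mat b b" for k l by (rule chan_carrier[OF chQ]) simp
  have rhs: "kron (1\<^sub>m a) (ptrace_first a b (N (mat_unit (a'*b') p q))) \<in> carrier_mat (a*b) (a*b)"
    by (rule kron_carrier[OF one_carrier_mat ptrace_carrier])
  show ?thesis
  proof (rule eq_matI)
    fix P Q assume "P < dim_row (kron (1\<^sub>m a) (ptrace_first a b (N (mat_unit (a'*b') p q))))"
      "Q < dim_col (kron (1\<^sub>m a) (ptrace_first a b (N (mat_unit (a'*b') p q))))"
    then have PQ: "P < a*b" "Q < a*b" using rhs by auto
    have "map_tensor a' a b' b (replace_one a) Q0 (mat_unit (a'*b') p q) $$ (P,Q) =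
      (\<Sum>i<a'. \<Sum>j<a'. \<Sum>k<b'. \<Sum>l<b'. mat_unit (a'*b') p q $$ (i*b' + k, j*b' + l) *
         kron (replace_one a (mat_unit a' i j)) (Q0 (mat_unit b' k l)) $$ (P,Q))"
      unfolding map_tensor_def using PQ by simp
    also have "\<dots> = (\<Sum>i<a'. \<Sum>j<a'. \<Sum>k<b'. \<Sum>l<b'.
        (if i = pA \<and> j = qA then (if k = pB \<and> l = qB then
         kron (replace_one a (mat_unit a' i j)) (Q0 (mat_unit b' k l)) $$ (P,Q) else 0) else 0))"
    proof (intro sum.cong refl)
      fix i j k l assume "i \<in> {..<a'}" "j \<in> {..<a'}" "k \<in> {..<b'}" "l \<in> {..<b'}"
      then have ii: "i < a'" "j < a'" "k < b'" "l < b'" by auto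
      then have "i*b'+k < a'*b'" "j*b'+l < a'*b'" using idx_lt by auto
      then show "mat_unit (a'*b') p q $$ (i*b' + k, j*b' + l) *
         kron (replace_one a (mat_unit a' i j)) (Q0 (mat_unit b' k l)) $$ (P,Q) =
        (if i = pA \<and> j = qA then (if k = pB \<and> l = qB then
         kron (replace_one a (mat_unit a' i j)) (Q0 (mat_unit b' k l)) $$ (P,Q) else 0) else 0)"
        unfolding p q using mat_unit_entry eq_idx[OF ii(3) ix(3), of i pA] eq_idx[OF ii(4) ix(4), of j qA]
        by auto
    qed
    also have "\<dots> = (\<Sum>k<b'. \<Sum>l<b'. (if k = pB \<and> l = qB then
         kron (replace_one a (mat_unit a' pA qA)) (Q0 (mat_unit b' k l)) $$ (P,Q) else 0))"
      by (rule sum4_delta[OF ix(1,2)])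
    also have "\<dots> = kron (replace_one a (mat_unit a' pA qA)) (Q0 (mat_unit b' pB qB)) $$ (P,Q)"
      by (rule sum2_delta[OF ix(3,4)])
    also have "\<dots> = replace_one a (mat_unit a' pA qA) $$ (P div b, Q div b) * Q0 (mat_unit b' pB qB) $$ (P mod b, Q mod b)"
      by (rule kron_entry[OF rc qc PQ])
    also have "\<dots> = (if pA = qA then 1\<^sub>m a $$ (P div b, Q div b) * Q0 (mat_unit b' pB qB) $$ (P mod b, Q mod b) else 0)"
    proof -
      have b1: "b > 0" using PQ by (cases b) auto
      have "P div b < a" "Q div b < a" using PQ b1 by (auto simp: less_mult_imp_div_less)
      then show ?thesis unfolding replace_one_def using mtrace_unit[OF ix(1,2)] by simp
    qed
    also have "\<dots> = kron (1\<^sub>m a) (ptrace_first a b (N (mat_unit (a'*b') p q))) $$ (P,Q)"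
    proof -
      have "ptrace_first a b (N (mat_unit (a'*b') p q)) = Q0 (if pA = qA then mat_unit b' pB qB else 0\<^sub>m b' b')"
        using ns ptrace_unit[OF ix] unfolding p q by simp
      moreover have "kron (1\<^sub>m a) (ptrace_first a b (N (mat_unit (a'*b') p q))) $$ (P,Q)
        = 1\<^sub>m a $$ (P div b, Q div b) * ptrace_first a b (N (mat_unit (a'*b') p q)) $$ (P mod b, Q mod b)"
        by (rule kron_entry[OF one_carrier_mat ptrace_carrier PQ])
      moreover have b1: "b > 0" using PQ by (cases b) auto
      ultimately show ?thesis using chan_zero[OF chQ] PQ
        by (cases "pA = qA") (auto simp: mod_less_divisor)
    qed
    finally show "map_tensor a' a b' b (replace_one a) Q0 (mat_unit (a'*b') p q) $$ (P,Q) =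
       kron (1\<^sub>m a) (ptrace_first a b (N (mat_unit (a'*b') p q))) $$ (P,Q)" .
  qed (use rhs in \<open>auto simp: map_tensor_def\<close>)
qed

theorem lemma3:
  fixes a' b' a b :: nat and N :: "complex mat \<Rightarrow> complex mat"
  assumes "a' > 0" and "b' > 0" and "a > 0" and "b > 0"
    and "is_channel (a'*b') (a*b) N"
    and "no_signaling a' b' a b N"
  shows "S_down (a'*a) (b'*b) (choi a' b' a b N) - ereal (log 2 (real a')) = S_nosig a' b' a b N
         \<and> S_nosig a' b' a b N \<le> S_inf a' b' a b N"
proof -
  note pos = assms(1-4)
  obtain Q0 where chQ: "is_channel b' b Q0"
    and ns: "\<forall>X \<in> carrier_mat (a'*b') (a'*b'). ptrace_first a b (N X) = Q0 (ptrace_first a' b' X)"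
    using assms(6) unfolding no_signaling_def by blast
  define M where "M = (\<lambda>X. kron (1\<^sub>m a) (ptrace_first a b (N X)))"
  define C where "C t = (\<lambda>p q x y. complex_of_real t * M (mat_unit (a'*b') p q) $$ (x,y) - N (mat_unit (a'*b') p q) $$ (x,y))" for t
  define Sset where "Sset = {t::real. t > 0 \<and> (\<forall>f. 0 \<le> choiform (a'*b') (a*b) (C t) f)}"
  define D where "D = (INF t\<in>Sset. ereal (log 2 t))"
  have LN: "N (mat_unit (a'*b') p q) \<in> carrier_mat (a*b) (a*b)" for p q
    using chan_carrier[OF assms(5)] by simp
  have LM: "M (mat_unit (a'*b') p q) \<in> carrier_mat (a*b) (a*b)" for p q
    unfolding M_def by (rule kron_carrier[OF one_carrier_mat ptrace_carrier])
  have n0: "a'*b' > 0" using pos by simp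
  have Dchan_eq: "Dchan (a'*b') (a*b) N M = D"
  proof (rule antisym)
    show "Dchan (a'*b') (a*b) N M \<le> D" unfolding Dchan_def
    proof (rule SUP_least)
      fix kr assume "kr \<in> {(k, \<rho>). density (k*(a'*b')) \<rho>}"
      then obtain k \<rho> where kr: "kr = (k,\<rho>)" and dens: "density (k*(a'*b')) \<rho>" by auto
      have "Dinf (id_tensor k (a'*b') (a*b) N \<rho>) (id_tensor k (a'*b') (a*b) M \<rho>) \<le> D"
        unfolding Dinf_def D_def
      proof (rule INF_superset_mono)
        show "Sset \<subseteq> {t. t > 0 \<and> loewner_le (id_tensor k (a'*b') (a*b) N \<rho>) (complex_of_real t \<cdot>\<^sub>m id_tensor k (a'*b') (a*b) M \<rho>)}"
        proof
          fix t assume "t \<in> Sset"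
          then have t: "t > 0" "\<forall>f. 0 \<le> choiform (a'*b') (a*b) (C t) f" unfolding Sset_def by auto
          have "loewner_le (id_tensor k (a'*b') (a*b) N \<rho>) (complex_of_real t \<cdot>\<^sub>m id_tensor k (a'*b') (a*b) M \<rho>)"
            by (rule E2) (use dens t LM LN in \<open>auto simp: density_def C_def\<close>)
          then show "t \<in> {t. t > 0 \<and> loewner_le (id_tensor k (a'*b') (a*b) N \<rho>) (complex_of_real t \<cdot>\<^sub>m id_tensor k (a'*b') (a*b) M \<rho>)}"
            using t by simp
        qed
      qed simp
      then show "(case kr of (k, \<rho>) \<Rightarrow> Dinf (id_tensor k (a'*b') (a*b) N \<rho>) (id_tensor k (a'*b') (a*b) M \<rho>)) \<le> D"
        using kr by simp
    qed
  next
    have "D \<le> Dinf (id_tensor (a'*b') (a'*b') (a*b) N (Phi0 (a'*b'))) (id_tensor (a'*b') (a'*b') (a*b) M (Phi0 (a'*b')))"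
      unfolding Dinf_def D_def
    proof (rule INF_superset_mono)
      show "{t. t > 0 \<and> loewner_le (id_tensor (a'*b') (a'*b') (a*b) N (Phi0 (a'*b'))) (complex_of_real t \<cdot>\<^sub>m id_tensor (a'*b') (a'*b') (a*b) M (Phi0 (a'*b')))} \<subseteq> Sset"
      proof
        fix t assume "t \<in> {t. t > 0 \<and> loewner_le (id_tensor (a'*b') (a'*b') (a*b) N (Phi0 (a'*b'))) (complex_of_real t \<cdot>\<^sub>m id_tensor (a'*b') (a'*b') (a*b) M (Phi0 (a'*b')))}"
        then have t: "t > 0" and le: "loewner_le (id_tensor (a'*b') (a'*b') (a*b) N (Phi0 (a'*b'))) (complex_of_real t \<cdot>\<^sub>m id_tensor (a'*b') (a'*b') (a*b) M (Phi0 (a'*b')))"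
          by auto
        have "0 \<le> choiform (a'*b') (a*b) (C t) f" for f
          unfolding C_def by (rule E3[OF n0 LM LN le])
        then show "t \<in> Sset" unfolding Sset_def using t by auto
      qed
    qed simp
    also have "\<dots> \<le> Dchan (a'*b') (a*b) N M" unfolding Dchan_def
      by (rule SUP_upper2[where i="(a'*b', Phi0 (a'*b'))"]) (auto intro: Phi0_density[OF n0])
    finally show "D \<le> Dchan (a'*b') (a*b) N M" .
  qed
  define J where "J = choi a' b' a b N"
  define S where "S = kron (1\<^sub>m (a'*a)) (ptrace_first (a'*a) (b'*b) J)"
  have a0: "real a' > 0" using pos by simp
  have e1: "loewner_le J (complex_of_real s \<cdot>\<^sub>m S) \<longleftrightarrow> (real a' * s) \<in> Sset" if s: "s > 0" for s
  proof -
    have c: "complex_of_real (real a' * s) / of_nat a' = complex_of_real s" using pos by simp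
    have "loewner_le J (complex_of_real s \<cdot>\<^sub>m S) \<longleftrightarrow>
      (\<forall>f. 0 \<le> choiform (a'*b') (a*b) (C (real a' * s)) f)"
      using E1[OF pos chQ ns, of "complex_of_real (real a' * s)"] unfolding c J_def S_def C_def M_def by simp
    then show ?thesis unfolding Sset_def using s a0 by simp
  qed
  have TJ: "{s::real. s > 0 \<and> loewner_le J (complex_of_real s \<cdot>\<^sub>m S)} = (\<lambda>t. t / real a') ` Sset"
  proof (rule equalityI; rule subsetI)
    fix s assume "s \<in> {s::real. s > 0 \<and> loewner_le J (complex_of_real s \<cdot>\<^sub>m S)}"
    then have s: "s > 0" "real a' * s \<in> Sset" using e1 by auto
    then show "s \<in> (\<lambda>t. t / real a') ` Sset" using a0 by (intro image_eqI[of _ _ "real a' * s"]) auto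
  next
    fix s assume "s \<in> (\<lambda>t. t / real a') ` Sset"
    then obtain t where t: "t \<in> Sset" "s = t / real a'" by auto
    then have "t > 0" unfolding Sset_def by auto
    then have "s > 0" using t a0 by simp
    moreover have "real a' * s = t" using t a0 by simp
    ultimately have "s > 0" "loewner_le J (complex_of_real s \<cdot>\<^sub>m S)" using e1 t(1) by blast+
    then show "s \<in> {s::real. s > 0 \<and> loewner_le J (complex_of_real s \<cdot>\<^sub>m S)}" by blast
  qed
  have DJ: "Dinf J S = D + ereal (- log 2 (real a'))"
  proof -
    have "Dinf J S = (INF s\<in>(\<lambda>t. t / real a') ` Sset. ereal (log 2 s))"
      unfolding Dinf_def TJ ..
    also have "\<dots> = (INF t\<in>Sset. ereal (log 2 (t / real a')))" by (simp add: image_image)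
    also have "\<dots> = (INF t\<in>Sset. ereal (log 2 t) + ereal (- log 2 (real a')))"
    proof (rule INF_cong[OF refl])
      fix t assume "t \<in> Sset"
      then have "t > 0" unfolding Sset_def by auto
      then show "ereal (log 2 (t / real a')) = ereal (log 2 t) + ereal (- log 2 (real a'))"
        using a0 by (simp add: log_divide)
    qed
    also have "\<dots> = D + ereal (- log 2 (real a'))" unfolding D_def by (rule INF_add_ereal[symmetric])
    finally show ?thesis .
  qed
  have nosig: "S_nosig a' b' a b N = - D"
    unfolding S_nosig_def Dchan_eq[unfolded M_def] ..
  have down: "S_down (a'*a) (b'*b) (choi a' b' a b N) = - (D + ereal (- log 2 (real a')))"
    unfolding S_down_def DJ[unfolded J_def S_def] ..
  have part1: "S_down (a'*a) (b'*b) (choi a' b' a b N) - ereal (log 2 (real a')) = S_nosig a' b' a b N"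
    unfolding down nosig by (cases D) simp_all
  have "id_tensor k (a'*b') (a*b) (map_tensor a' a b' b (replace_one a) Q0) = id_tensor k (a'*b') (a*b) M" for k
    by (rule IT_cong) (simp add: M_def map_tensor_unit[OF chQ ns])
  then have DQ: "Dchan (a'*b') (a*b) N (map_tensor a' a b' b (replace_one a) Q0) = D"
    unfolding Dchan_eq[symmetric] Dchan_def by simp
  have "(INF Q\<in>{Q. is_channel b' b Q}. Dchan (a'*b') (a*b) N (map_tensor a' a b' b (replace_one a) Q)) \<le> D"
    using INF_lower[of Q0 "{Q. is_channel b' b Q}"] chQ DQ by fastforce
  then have part2: "S_nosig a' b' a b N \<le> S_inf a' b' a b N"
    unfolding nosig S_inf_def by simp
  show ?thesis using part1 part2 ..
qed



end
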